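(* (1) There exists a minimal monad on $\mathbb{P}^3$ of the form $$\mathcal{O}(-5)\oplus\mathcal{O}(-3)\xrightarrow{\alpha}\mathcal{O}(3)\oplus\mathcal{O}(1)^{\oplus2}\oplus\mathcal{O}(-2)^{\oplus2}\oplus\mathcal{O}(-4)\xrightarrow{\beta}\mathcal{O}(4)\oplus\mathcal{O}(2)$$ (i.e. $\boldsymbol{a}=(4,2)$, $\boldsymbol{b}=(3,1,1)$). (2) There exists a minimal monad on $\mathbb{P}^3$ of the form $$\mathcal{O}(-4)^{\oplus2}\xrightarrow{\alpha}\mathcal{O}(2)^{\oplus2}\oplus\mathcal{O}(1)\oplus\mathcal{O}(-2)\oplus\mathcal{O}(-3)^{\oplus2}\xrightarrow{\beta}\mathcal{O}(3)^{\oplus2}$$ (i.e. $\boldsymbol{a}=(3,3)$, $\boldsymbol{b}=(2,2,1)$).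
   Context: Work on $\mathbb{P}^3$ over an algebraically closed field; $\mathcal{O}=\mathcal{O}_{\mathbb{P}^3}$. A monad is a complex $\mathcal{C}\xrightarrow{\alpha}\mathcal{B}\xrightarrow{\beta}\mathcal{A}$ of vector bundles (so $\beta\circ\alpha=0$) with $\alpha$ injective and $\beta$ surjective; it is minimal if no entry of the matrices of $\alpha$ and $\beta$, as homogeneous forms, is a nonzero constant. *)

theory Defs
  imports "HOL-Library.Poly_Mapping" "HOL-Computational_Algebra.Polynomial"
begin

text \<open>Polynomials in the variables x_0,...,x_3 (homogeneous coordinates of P^3) over a field 'k:
  a polynomial is a finitely supported map from monomials (exponent vectors, finitely supported
  maps nat to nat) to coefficients.\<close>

type_synonym 'k mpoly = "(nat \<Rightarrow>\<^sub>0 nat) \<Rightarrow>\<^sub>0 'k"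

text \<open>A polynomial in x_0..x_3 that is a homogeneous form of degree d (0 is a form of every degree).\<close>
definition homog_form :: "nat \<Rightarrow> 'k::zero mpoly \<Rightarrow> bool" where
  "homog_form d p \<longleftrightarrow>
     (\<forall>m \<in> Poly_Mapping.keys p. (\<forall>i. Poly_Mapping.lookup m i \<noteq> 0 \<longrightarrow> i < 4) \<and> (\<Sum>i<4. Poly_Mapping.lookup m i) = d)"

text \<open>Entry of a map O(c) to O(b): a form of degree b - c (necessarily 0 if b < c).\<close>
definition form_of_deg :: "int \<Rightarrow> 'k::zero mpoly \<Rightarrow> bool" where
  "form_of_deg e p \<longleftrightarrow> (if e < 0 then p = 0 else homog_form (nat e) p)"

definition peval :: "'k::comm_semiring_1 mpoly \<Rightarrow> (nat \<Rightarrow> 'k) \<Rightarrow> 'k" where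
  "peval p x = (\<Sum>m\<in>Poly_Mapping.keys p. Poly_Mapping.lookup p m * (\<Prod>i<4. x i ^ Poly_Mapping.lookup m i))"

definition nonzero_const :: "'k::zero mpoly \<Rightarrow> bool" where
  "nonzero_const p \<longleftrightarrow> p \<noteq> 0 \<and> Poly_Mapping.keys p \<subseteq> {0}"

text \<open>Points of P^3: nonzero vectors of k^4 (coordinates 0..3).\<close>
definition nonzero_pt :: "(nat \<Rightarrow> 'k::zero) \<Rightarrow> bool" where
  "nonzero_pt x \<longleftrightarrow> (\<exists>i<4. x i \<noteq> 0)"

text \<open>Minimal monad  C = \<Oplus>_k O(cs!k)  --alpha-->  B = \<Oplus>_j O(bs!j)  --beta-->  A = \<Oplus>_i O(as!i).
  alpha is given by the matrix (alpha j k), beta by (beta i j).\<close>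
definition minimal_monad ::
  "int list \<Rightarrow> int list \<Rightarrow> int list \<Rightarrow> (nat \<Rightarrow> nat \<Rightarrow> 'k::field mpoly) \<Rightarrow> (nat \<Rightarrow> nat \<Rightarrow> 'k mpoly) \<Rightarrow> bool"
where
  "minimal_monad cs bs as alpha beta \<longleftrightarrow>
     (\<forall>j<length bs. \<forall>k<length cs. form_of_deg (bs!j - cs!k) (alpha j k)) \<and>
     (\<forall>i<length as. \<forall>j<length bs. form_of_deg (as!i - bs!j) (beta i j)) \<and>
     (\<forall>i<length as. \<forall>k<length cs. (\<Sum>j<length bs. beta i j * alpha j k) = 0) \<and>
     (\<forall>x. nonzero_pt x \<longrightarrow> (\<forall>v::nat \<Rightarrow> 'k.
         (\<forall>j<length bs. (\<Sum>k<length cs. peval (alpha j k) x * v k) = 0) \<longrightarrow> (\<forall>k<length cs. v k = 0))) \<and>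
     (\<forall>x. nonzero_pt x \<longrightarrow> (\<forall>w::nat \<Rightarrow> 'k. \<exists>v::nat \<Rightarrow> 'k.
         \<forall>i<length as. (\<Sum>j<length bs. peval (beta i j) x * v j) = w i)) \<and>
     (\<forall>j<length bs. \<forall>k<length cs. \<not> nonzero_const (alpha j k)) \<and>
     (\<forall>i<length as. \<forall>j<length bs. \<not> nonzero_const (beta i j))"

end

theory Submission
  imports Defs
begin

definition X :: "nat \<Rightarrow> nat \<Rightarrow> 'k::field mpoly" where
  "X i d = Poly_Mapping.single (Poly_Mapping.single i d) 1"

lemma keys_neg: "Poly_Mapping.keys (- (p::'k::ab_group_add mpoly)) = Poly_Mapping.keys p"
  by (auto simp: in_keys_iff)

lemma keys_X: "Poly_Mapping.keys (X i d :: 'k::field mpoly) = {Poly_Mapping.single i d}"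
  by (simp add: X_def)

lemma sum4_single: "(i::nat) < 4 \<Longrightarrow> (\<Sum>j<4. Poly_Mapping.lookup (Poly_Mapping.single i d) j) = (d::nat)"
  by (auto simp: lookup_single when_def eval_nat_numeral)

lemma homog_X: "i < 4 \<Longrightarrow> homog_form d (X i d :: 'k::field mpoly)"
  unfolding homog_form_def keys_X by (auto simp: lookup_single when_def sum4_single)

lemma homog_negX: "i < 4 \<Longrightarrow> homog_form d (- X i d :: 'k::field mpoly)"
  using homog_X unfolding homog_form_def keys_neg by blast

lemma homog_zero: "homog_form d 0"
  by (simp add: homog_form_def)

lemma peval_X: "i < 4 \<Longrightarrow> peval (X i d :: 'k::field mpoly) x = x i ^ d"
  unfolding peval_def keys_X
  by (auto simp: X_def lookup_single when_def eval_nat_numeral less_Suc_eq)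

lemma peval_neg: "peval (- p :: 'k::field mpoly) x = - peval p x"
  unfolding peval_def keys_neg by (simp add: sum_negf)

lemma peval_zero: "peval (0 :: 'k::field mpoly) x = 0"
  unfolding peval_def by simp

lemma nnc_X: "d > 0 \<Longrightarrow> \<not> nonzero_const (X i d :: 'k::field mpoly)"
  unfolding nonzero_const_def keys_X
  by (auto simp: poly_mapping_eq_iff fun_eq_iff lookup_single when_def)

lemma nnc_negX: "d > 0 \<Longrightarrow> \<not> nonzero_const (- X i d :: 'k::field mpoly)"
  using nnc_X unfolding nonzero_const_def keys_neg by auto

lemma nnc_zero: "\<not> nonzero_const 0"
  by (simp add: nonzero_const_def)

lemma less6: "(j::nat) < 6 \<Longrightarrow> j = 0 \<or> j = 1 \<or> j = 2 \<or> j = 3 \<or> j = 4 \<or> j = 5"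
  by linarith
lemma all6: "(\<forall>j<(6::nat). P j) \<longleftrightarrow> P 0 \<and> P 1 \<and> P 2 \<and> P 3 \<and> P 4 \<and> P 5"
proof
  assume "\<forall>j<(6::nat). P j" then show "P 0 \<and> P 1 \<and> P 2 \<and> P 3 \<and> P 4 \<and> P 5" by simp
next
  assume h: "P 0 \<and> P 1 \<and> P 2 \<and> P 3 \<and> P 4 \<and> P 5"
  show "\<forall>j<(6::nat). P j"
  proof (intro allI impI)
    fix j :: nat assume "j < 6"
    then have "j = 0 \<or> j = 1 \<or> j = 2 \<or> j = 3 \<or> j = 4 \<or> j = 5" by (rule less6)
    then show "P j" using h by blast
  qed
qed
lemma all2: "(\<forall>j<(2::nat). P j) \<longleftrightarrow> P 0 \<and> P 1"
proof
  assume "\<forall>j<(2::nat). P j" then show "P 0 \<and> P 1" by simp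
next
  assume h: "P 0 \<and> P 1"
  show "\<forall>j<(2::nat). P j"
  proof (intro allI impI)
    fix j :: nat assume "j < 2"
    then have "j = 0 \<or> j = 1" by linarith
    then show "P j" using h by blast
  qed
qed
lemma len2: "length [a, b] = 2" by simp
lemma len6: "length [a, b, c, d, e, f] = 6" by simp

lemma sum2: "(\<Sum>j<(2::nat). f j) = f 0 + f 1"
  by (simp add: eval_nat_numeral)

lemma sum6: "(\<Sum>j<(6::nat). f j) = f 0 + f 1 + f 2 + f 3 + f 4 + f 5"
  by (simp add: eval_nat_numeral)

lemma nzpt: "nonzero_pt x \<longleftrightarrow> x 0 \<noteq> 0 \<or> x 1 \<noteq> 0 \<or> x 2 \<noteq> 0 \<or> x 3 \<noteq> 0"
proof
  assume "nonzero_pt x"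
  then obtain i where i: "i < 4" "x i \<noteq> 0" unfolding nonzero_pt_def by blast
  then have "i = 0 \<or> i = 1 \<or> i = 2 \<or> i = 3" by linarith
  then show "x 0 \<noteq> 0 \<or> x 1 \<noteq> 0 \<or> x 2 \<noteq> 0 \<or> x 3 \<noteq> 0" using i by blast
next
  assume "x 0 \<noteq> 0 \<or> x 1 \<noteq> 0 \<or> x 2 \<noteq> 0 \<or> x 3 \<noteq> 0"
  moreover have "(0::nat) < 4" "(1::nat) < 4" "(2::nat) < 4" "(3::nat) < 4" by simp_all
  ultimately show "nonzero_pt x" unfolding nonzero_pt_def by blast
qed

definition A1 :: "nat \<Rightarrow> nat \<Rightarrow> 'k::field mpoly" where
  "A1 j k = [[X 3 8, X 2 6], [0, X 3 4], [X 2 6, 0], [0, - X 1 1], [- X 1 3, - X 0 1], [- X 0 1, 0]] ! j ! k"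

definition B1 :: "nat \<Rightarrow> nat \<Rightarrow> 'k::field mpoly" where
  "B1 i j = [[X 0 1, 0, X 1 3, 0, X 2 6, X 3 8], [0, X 1 1, X 0 1, X 3 4, 0, X 2 6]] ! i ! j"

lemmas evs = peval_X peval_neg peval_zero

lemma monad1: "minimal_monad [-5, -3] [3, 1, 1, -2, -2, -4] [4, 2] (A1 :: nat \<Rightarrow> nat \<Rightarrow> 'k::field mpoly) B1"
  unfolding minimal_monad_def
proof (intro conjI)
  show "\<forall>j<length [3, 1, 1, -2, -2, -4::int]. \<forall>k<length [-5, -3::int].
      form_of_deg ([3, 1, 1, -2, -2, -4] ! j - [-5, -3] ! k) (A1 j k :: 'k mpoly)"
    unfolding len2 len6 all2 all6 by (simp add: A1_def form_of_deg_def homog_X homog_negX homog_zero)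
  show "\<forall>i<length [4, 2::int]. \<forall>j<length [3, 1, 1, -2, -2, -4::int].
      form_of_deg ([4, 2] ! i - [3, 1, 1, -2, -2, -4] ! j) (B1 i j :: 'k mpoly)"
    unfolding len2 len6 all2 all6 by (simp add: B1_def form_of_deg_def homog_X homog_negX homog_zero)
  show "\<forall>i<length [4, 2::int]. \<forall>k<length [-5, -3::int].
      (\<Sum>j<length [3, 1, 1, -2, -2, -4::int]. B1 i j * A1 j k :: 'k mpoly) = 0"
    unfolding len2 len6 all2 all6 sum6 by (simp add: A1_def B1_def algebra_simps)
  show "\<forall>j<length [3, 1, 1, -2, -2, -4::int]. \<forall>k<length [-5, -3::int].
      \<not> nonzero_const (A1 j k :: 'k mpoly)"
    unfolding len2 len6 all2 all6 by (simp add: A1_def nnc_X nnc_negX nnc_zero)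
  show "\<forall>i<length [4, 2::int]. \<forall>j<length [3, 1, 1, -2, -2, -4::int].
      \<not> nonzero_const (B1 i j :: 'k mpoly)"
    unfolding len2 len6 all2 all6 by (simp add: B1_def nnc_X nnc_negX nnc_zero)
  show "\<forall>x. nonzero_pt x \<longrightarrow> (\<forall>v::nat \<Rightarrow> 'k.
         (\<forall>j<length [3, 1, 1, -2, -2, -4::int]. (\<Sum>k<length [-5, -3::int]. peval (A1 j k) x * v k) = 0)
            \<longrightarrow> (\<forall>k<length [-5, -3::int]. v k = 0))"
  proof (intro allI impI)
    fix x :: "nat \<Rightarrow> 'k" and v :: "nat \<Rightarrow> 'k" and k :: nat
    assume nz: "nonzero_pt x" and h: "\<forall>j<length [3, 1, 1, -2, -2, -4::int]. (\<Sum>k<length [-5, -3::int]. peval (A1 j k) x * v k) = 0"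
      and hk: "k < length [-5, -3::int]"
    have e: "x 3 ^ 8 * v 0 + x 2 ^ 6 * v 1 = 0" "x 3 ^ 4 * v 1 = 0" "x 2 ^ 6 * v 0 = 0"
       "- (x 1 * v 1) = 0" "- (x 1 ^ 3 * v 0) - x 0 * v 1 = 0" "- (x 0 * v 0) = 0"
      using h unfolding len2 len6 all6 sum2 by (simp_all add: A1_def evs)
    have "v 0 = 0 \<and> v 1 = 0"
      using nz unfolding nzpt
    proof (elim disjE)
      assume a: "x 0 \<noteq> 0"
      then have "v 0 = 0" using e(6) by simp
      then show ?thesis using a e(5) by simp
    next
      assume a: "x 1 \<noteq> 0"
      then have "v 1 = 0" using e(4) by simp
      then show ?thesis using a e(5) by simp
    next
      assume a: "x 2 \<noteq> 0"
      then have "v 0 = 0" using e(3) by simp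
      then show ?thesis using a e(1) by simp
    next
      assume a: "x 3 \<noteq> 0"
      then have "v 1 = 0" using e(2) by simp
      then show ?thesis using a e(1) by simp
    qed
    then show "v k = 0" using hk by (auto simp: less_Suc_eq)
  qed
  show "\<forall>x. nonzero_pt x \<longrightarrow> (\<forall>w::nat \<Rightarrow> 'k. \<exists>v::nat \<Rightarrow> 'k.
         \<forall>i<length [4, 2::int]. (\<Sum>j<length [3, 1, 1, -2, -2, -4::int]. peval (B1 i j) x * v j) = w i)"
  proof (intro allI impI)
    fix x :: "nat \<Rightarrow> 'k" and w :: "nat \<Rightarrow> 'k"
    assume nz: "nonzero_pt x"
    show "\<exists>v::nat \<Rightarrow> 'k. \<forall>i<length [4, 2::int]. (\<Sum>j<length [3, 1, 1, -2, -2, -4::int]. peval (B1 i j) x * v j) = w i"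
      using nz[unfolded nzpt]
    proof (elim disjE)
      assume a: "x 0 \<noteq> 0"
      show ?thesis
        apply (rule exI[of _ "\<lambda>j. if j = 0 then (w 0 - x 1 ^ 3 * (w 1 / x 0)) / x 0 else if j = 2 then w 1 / x 0 else 0"])
        using a unfolding len2 len6 all2 sum6 apply (simp add: B1_def evs)
        done
    next
      assume a: "x 1 \<noteq> 0"
      show ?thesis
        apply (rule exI[of _ "\<lambda>j. if j = 2 then w 0 / x 1 ^ 3 else if j = 1 then (w 1 - x 0 * (w 0 / x 1 ^ 3)) / x 1 else 0"])
        using a unfolding len2 len6 all2 sum6 apply (simp add: B1_def evs)
        done
    next
      assume a: "x 2 \<noteq> 0"
      show ?thesis
        apply (rule exI[of _ "\<lambda>j. if j = 5 then w 1 / x 2 ^ 6 else if j = 4 then (w 0 - x 3 ^ 8 * (w 1 / x 2 ^ 6)) / x 2 ^ 6 else 0"])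
        using a unfolding len2 len6 all2 sum6 apply (simp add: B1_def evs)
        done
    next
      assume a: "x 3 \<noteq> 0"
      show ?thesis
        apply (rule exI[of _ "\<lambda>j. if j = 5 then w 0 / x 3 ^ 8 else if j = 3 then (w 1 - x 2 ^ 6 * (w 0 / x 3 ^ 8)) / x 3 ^ 4 else 0"])
        using a unfolding len2 len6 all2 sum6 apply (simp add: B1_def evs)
        done
    qed
  qed
qed

definition A2 :: "nat \<Rightarrow> nat \<Rightarrow> 'k::field mpoly" where
  "A2 j k = [[X 3 6, X 2 6], [0, X 3 6], [X 2 5, 0], [- X 1 2, 0], [- X 0 1, - X 1 1], [0, - X 0 1]] ! j ! k"

definition B2 :: "nat \<Rightarrow> nat \<Rightarrow> 'k::field mpoly" where
  "B2 i j = [[0, X 0 1, X 1 2, X 2 5, 0, X 3 6], [X 0 1, X 1 1, 0, 0, X 3 6, X 2 6]] ! i ! j"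

lemma monad2: "minimal_monad [-4, -4] [2, 2, 1, -2, -3, -3] [3, 3] (A2 :: nat \<Rightarrow> nat \<Rightarrow> 'k::field mpoly) B2"
  unfolding minimal_monad_def
proof (intro conjI)
  show "\<forall>j<length [2, 2, 1, -2, -3, -3::int]. \<forall>k<length [-4, -4::int].
      form_of_deg ([2, 2, 1, -2, -3, -3] ! j - [-4, -4] ! k) (A2 j k :: 'k mpoly)"
    unfolding len2 len6 all2 all6 by (simp add: A2_def form_of_deg_def homog_X homog_negX homog_zero)
  show "\<forall>i<length [3, 3::int]. \<forall>j<length [2, 2, 1, -2, -3, -3::int].
      form_of_deg ([3, 3] ! i - [2, 2, 1, -2, -3, -3] ! j) (B2 i j :: 'k mpoly)"
    unfolding len2 len6 all2 all6 by (simp add: B2_def form_of_deg_def homog_X homog_negX homog_zero)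
  show "\<forall>i<length [3, 3::int]. \<forall>k<length [-4, -4::int].
      (\<Sum>j<length [2, 2, 1, -2, -3, -3::int]. B2 i j * A2 j k :: 'k mpoly) = 0"
    unfolding len2 len6 all2 all6 sum6 by (simp add: A2_def B2_def algebra_simps)
  show "\<forall>j<length [2, 2, 1, -2, -3, -3::int]. \<forall>k<length [-4, -4::int].
      \<not> nonzero_const (A2 j k :: 'k mpoly)"
    unfolding len2 len6 all2 all6 by (simp add: A2_def nnc_X nnc_negX nnc_zero)
  show "\<forall>i<length [3, 3::int]. \<forall>j<length [2, 2, 1, -2, -3, -3::int].
      \<not> nonzero_const (B2 i j :: 'k mpoly)"
    unfolding len2 len6 all2 all6 by (simp add: B2_def nnc_X nnc_negX nnc_zero)
  show "\<forall>x. nonzero_pt x \<longrightarrow> (\<forall>v::nat \<Rightarrow> 'k.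
         (\<forall>j<length [2, 2, 1, -2, -3, -3::int]. (\<Sum>k<length [-4, -4::int]. peval (A2 j k) x * v k) = 0)
            \<longrightarrow> (\<forall>k<length [-4, -4::int]. v k = 0))"
  proof (intro allI impI)
    fix x :: "nat \<Rightarrow> 'k" and v :: "nat \<Rightarrow> 'k" and k :: nat
    assume nz: "nonzero_pt x" and h: "\<forall>j<length [2, 2, 1, -2, -3, -3::int]. (\<Sum>k<length [-4, -4::int]. peval (A2 j k) x * v k) = 0"
      and hk: "k < length [-4, -4::int]"
    have e: "x 3 ^ 6 * v 0 + x 2 ^ 6 * v 1 = 0" "x 3 ^ 6 * v 1 = 0" "x 2 ^ 5 * v 0 = 0"
       "- (x 1 ^ 2 * v 0) = 0" "- (x 0 * v 0) - x 1 * v 1 = 0" "- (x 0 * v 1) = 0"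
      using h unfolding len2 len6 all6 sum2 by (simp_all add: A2_def evs)
    have "v 0 = 0 \<and> v 1 = 0"
      using nz unfolding nzpt
    proof (elim disjE)
      assume a: "x 0 \<noteq> 0"
      then have "v 1 = 0" using e(6) by simp
      then show ?thesis using a e(5) by simp
    next
      assume a: "x 1 \<noteq> 0"
      then have "v 0 = 0" using e(4) by simp
      then show ?thesis using a e(5) by simp
    next
      assume a: "x 2 \<noteq> 0"
      then have "v 0 = 0" using e(3) by simp
      then show ?thesis using a e(1) by simp
    next
      assume a: "x 3 \<noteq> 0"
      then have "v 1 = 0" using e(2) by simp
      then show ?thesis using a e(1) by simp
    qed
    then show "v k = 0" using hk by (auto simp: less_Suc_eq)
  qed
  show "\<forall>x. nonzero_pt x \<longrightarrow> (\<forall>w::nat \<Rightarrow> 'k. \<exists>v::nat \<Rightarrow> 'k.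
         \<forall>i<length [3, 3::int]. (\<Sum>j<length [2, 2, 1, -2, -3, -3::int]. peval (B2 i j) x * v j) = w i)"
  proof (intro allI impI)
    fix x :: "nat \<Rightarrow> 'k" and w :: "nat \<Rightarrow> 'k"
    assume nz: "nonzero_pt x"
    show "\<exists>v::nat \<Rightarrow> 'k. \<forall>i<length [3, 3::int]. (\<Sum>j<length [2, 2, 1, -2, -3, -3::int]. peval (B2 i j) x * v j) = w i"
      using nz[unfolded nzpt]
    proof (elim disjE)
      assume a: "x 0 \<noteq> 0"
      show ?thesis
        apply (rule exI[of _ "\<lambda>j. if j = 1 then w 0 / x 0 else if j = 0 then (w 1 - x 1 * (w 0 / x 0)) / x 0 else 0"])
        using a unfolding len2 len6 all2 sum6 apply (simp add: B2_def evs)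
        done
    next
      assume a: "x 1 \<noteq> 0"
      show ?thesis
        apply (rule exI[of _ "\<lambda>j. if j = 1 then w 1 / x 1 else if j = 2 then (w 0 - x 0 * (w 1 / x 1)) / x 1 ^ 2 else 0"])
        using a unfolding len2 len6 all2 sum6 apply (simp add: B2_def evs)
        done
    next
      assume a: "x 2 \<noteq> 0"
      show ?thesis
        apply (rule exI[of _ "\<lambda>j. if j = 5 then w 1 / x 2 ^ 6 else if j = 3 then (w 0 - x 3 ^ 6 * (w 1 / x 2 ^ 6)) / x 2 ^ 5 else 0"])
        using a unfolding len2 len6 all2 sum6 apply (simp add: B2_def evs)
        done
    next
      assume a: "x 3 \<noteq> 0"
      show ?thesis
        apply (rule exI[of _ "\<lambda>j. if j = 5 then w 0 / x 3 ^ 6 else if j = 4 then (w 1 - x 2 ^ 6 * (w 0 / x 3 ^ 6)) / x 3 ^ 6 else 0"])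
        using a unfolding len2 len6 all2 sum6 apply (simp add: B2_def evs)
        done
    qed
  qed
qed

theorem proposition13:
  shows "(\<exists>(alpha :: nat \<Rightarrow> nat \<Rightarrow> 'k::alg_closed_field mpoly) beta.
            minimal_monad [-5, -3] [3, 1, 1, -2, -2, -4] [4, 2] alpha beta) \<and>
         (\<exists>(alpha :: nat \<Rightarrow> nat \<Rightarrow> 'k mpoly) beta.
            minimal_monad [-4, -4] [2, 2, 1, -2, -3, -3] [3, 3] alpha beta)"
  using monad1 monad2 by blast

end
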